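(* Let $m\geq1$ and let $\Delta$ be the triangle with vertices $(-\alpha,0)$, $(m-1+\beta,0)$, $(m,m+1)$, where $\alpha,\beta$ are rational with $0<\alpha<\frac{1}{1+(m+1)+(m+1)^2}$ and $\frac{1}{m+2}<\beta<1-\frac{1}{1+\frac{1}{m+1}+\frac{1}{(m+1)^2}-\frac{\alpha}{1-(m+2)\alpha}}$. With $C$, $D$ and $HC_k$ as in the context, $m\notin HC_k$.
   Context: Let $k$ be an algebraically closed field of characteristic zero, $t_0=(1,1)$. For a rational triangle $\Delta$, $X_\Delta$ is the projective toric surface defined by $\Delta$ (containing the torus $T$ with coordinates $x,y$), $\pi:X=\mathrm{Bl}_{t_0}X_\Delta\to X_\Delta$ the blowup with exceptional curve $E$. Divisor classes on $X_\Delta$ correspond to rational triangles with sides parallel to those of $\Delta$ (each side's line containing a lattice point), up to integral translation, and global sections of the corresponding sheaf are Laurent polynomials with Newton polygon in that triangle. $\xi_m\in\mathbb{Z}[x,y]$ is the polynomial $(-1)^mx^my^{m+1}+\sum_{j=0}^{m-1}\sum_{i=j}^{m-1}(-1)^j\binom{m+1}{j}x^iy^j$. $C\subset X$ is the strict transform of $\{\xi_m=0\}$. $D$ is the class $\pi^*H'-(m+1)E$, where $H'$ corresponds to the triangle with sides parallel to those of $\Delta$ and base the interval $[0,m]$ on the $x$-axis. For a global section $s$ of $\mathcal{O}_X(lD)$ given by a rational function $f$, $V(s)$ is the support of $\mathrm{div}(f)+lD$. $HC_k=\{l\in\mathbb{Z}_{>0}:\mathcal{O}_X(lD)\text{ has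 a global section }\zeta\text{ with }C\cap V(\zeta)=\emptyset\}$. Equivalently, $l\in HC_k$ iff there is a Laurent polynomial $\zeta\in k[x^{\pm1},y^{\pm1}]$ whose Newton polygon lies in the triangle with sides parallel to those of $\Delta$ and base $[0,lm]$ on the $x$-axis, vanishing to order $l(m+1)$ at $t_0$, with nonzero constant term. *)

theory Defs
  imports "HOL-Computational_Algebra.Polynomial"
begin

text \<open>A Laurent polynomial in k[x^{+-1},y^{+-1}] is represented by its coefficient
  function c :: int \<times> int \<Rightarrow> 'k (c (i,j) is the coefficient of x^i y^j) with finite support.\<close>

definition laurent_poly :: "(int \<times> int \<Rightarrow> 'k::zero) \<Rightarrow> bool" where
  "laurent_poly c \<longleftrightarrow> finite {p. c p \<noteq> 0}"

definition lsupp :: "(int \<times> int \<Rightarrow> 'k::zero) \<Rightarrow> (int \<times> int) set" where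
  "lsupp c = {p. c p \<noteq> 0}"

text \<open>The (closed) triangle with sides parallel to those of the triangle Delta with vertices
  (-alpha,0), (m-1+beta,0), (m,m+1), and base the interval [0,L] on the x-axis.
  Its left side is the line through (0,0) with direction (m+alpha, m+1),
  its right side the line through (L,0) with direction (1-beta, m+1) (up to orientation).\<close>

definition tri :: "rat \<Rightarrow> rat \<Rightarrow> nat \<Rightarrow> nat \<Rightarrow> rat \<times> rat \<Rightarrow> bool" where
  "tri \<alpha> \<beta> m L = (\<lambda>(u, v). 0 \<le> v \<and>
       (of_nat m + \<alpha>) * v \<le> (of_nat m + 1) * u \<and>
       (of_nat m + 1) * (u - of_nat L) \<le> (1 - \<beta>) * v)"

text \<open>Newton polygon (convex hull of the support) lies in the (convex) triangle iff
  every exponent of the support does.\<close>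

definition newton_in_tri :: "rat \<Rightarrow> rat \<Rightarrow> nat \<Rightarrow> nat \<Rightarrow> (int \<times> int \<Rightarrow> 'k::zero) \<Rightarrow> bool" where
  "newton_in_tri \<alpha> \<beta> m L c \<longleftrightarrow>
     (\<forall>(i, j) \<in> lsupp c. tri \<alpha> \<beta> m L (of_int i, of_int j))"

text \<open>Vanishing to order at least N at t0 = (1,1): all Taylor coefficients at (1,1) of total
  degree < N vanish.  Writing x = 1+u, y = 1+v, the coefficient of u^a v^b in x^i y^j is
  (i gchoose a)(j gchoose b) (valid for all integers i, j).\<close>

definition vanishes_to_order_at_t0 :: "(int \<times> int \<Rightarrow> 'k::field_char_0) \<Rightarrow> nat \<Rightarrow> bool" where
  "vanishes_to_order_at_t0 c N \<longleftrightarrow>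
     (\<forall>a b. a + b < N \<longrightarrow>
        (\<Sum>(i, j) \<in> lsupp c. c (i, j) * ((of_int i :: 'k) gchoose a) * ((of_int j :: 'k) gchoose b)) = 0)"

definition HC :: "'k::field_char_0 itself \<Rightarrow> rat \<Rightarrow> rat \<Rightarrow> nat \<Rightarrow> nat set" where
  "HC _ \<alpha> \<beta> m = {l. 0 < l \<and>
     (\<exists>c :: int \<times> int \<Rightarrow> 'k. laurent_poly c \<and> newton_in_tri \<alpha> \<beta> m (l * m) c \<and>
        vanishes_to_order_at_t0 c (l * (m + 1)) \<and> c (0, 0) \<noteq> 0)}"

definition alg_closed_type :: "'k::field itself \<Rightarrow> bool" where
  "alg_closed_type _ \<longleftrightarrow> (\<forall>p :: 'k poly. 0 < degree p \<longrightarrow> (\<exists>x. poly p x = 0))"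

end

theory Submission
  imports Defs
begin

lemma geom:
  fixes i j :: int and m :: nat and \<alpha> \<beta> :: rat
  assumes m1: "1 \<le> m" and a0: "0 < \<alpha>" and b0: "1 / (of_nat m + 2) < \<beta>"
    and T: "tri \<alpha> \<beta> m (m * m) (of_int i, of_int j)"
  shows "(i = 0 \<and> j = 0) \<or> (1 \<le> i \<and> i < int (m * (m + 1)))"
proof -
  have t1: "0 \<le> (of_int j :: rat)"
    and t2: "(of_nat m + \<alpha>) * of_int j \<le> (of_nat m + 1) * (of_int i :: rat)"
    and t3: "(of_nat m + 1) * (of_int i - of_nat (m*m)) \<le> (1 - \<beta>) * (of_int j :: rat)"
    using T by (auto simp: tri_def)
  have j0: "0 \<le> j" using t1 by simp
  have i0: "0 \<le> i"
  proof -
    have "0 \<le> (of_nat m + \<alpha>) * (of_int j :: rat)" using t1 a0 by simp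
    then have "0 \<le> (of_nat m + 1) * (of_int i :: rat)" using t2 by linarith
    then have "0 \<le> (of_int i :: rat)"
      by (simp add: zero_le_mult_iff add_pos_nonneg)
    then show ?thesis by simp
  qed
  have lj: "j > 0 \<Longrightarrow> int m * j + 1 \<le> (int m + 1) * i"
  proof -
    assume jp: "j > 0"
    have "(of_nat m) * (of_int j :: rat) < (of_nat m + \<alpha>) * of_int j"
      using jp a0 by (simp add: distrib_right)
    then have "(of_nat m) * (of_int j :: rat) < (of_nat m + 1) * of_int i" using t2 by linarith
    then have "of_int (int m * j) < (of_int ((int m + 1) * i) :: rat)" by simp
    then have "int m * j < (int m + 1) * i" by linarith
    then show ?thesis by linarith
  qed
  have c1: "i = 0 \<Longrightarrow> j = 0"
  proof (rule ccontr)
    assume "i = 0" "j \<noteq> 0"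
    then have jp: "j > 0" using j0 by simp
    have "int m * j \<ge> 0" using j0 by simp
    with lj[OF jp] \<open>i = 0\<close> show False by simp
  qed
  have c2: "i < int (m * (m + 1))"
  proof (rule ccontr)
    assume "\<not> i < int (m * (m + 1))"
    then have ib: "i \<ge> int m * int m + int m" by (simp add: algebra_simps)
    have mp: "(0::rat) < of_nat m + 1" by simp
    have pos: "(0::rat) < of_int i - of_nat (m*m)"
    proof -
      have "of_int i \<ge> (of_int (int m * int m + int m) :: rat)" using ib by linarith
      then show ?thesis using m1 by simp
    qed
    have "0 < (of_nat m + 1) * (of_int i - of_nat (m*m) :: rat)" using pos mp by simp
    then have q: "0 < (1 - \<beta>) * (of_int j :: rat)" using t3 by linarith
    have m2: "(0::rat) < of_nat m + 2" by simp
    have bb: "1 - \<beta> < (of_nat m + 1) / (of_nat m + 2)"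
    proof -
      have "(of_nat m + 1) / (of_nat m + 2) = 1 - 1 / (of_nat m + (2::rat))"
        using m2 by (simp add: field_simps)
      then show ?thesis using b0 by simp
    qed
    have jp: "0 < j"
    proof -
      have "(0::rat) < of_int j"
      proof (rule ccontr)
        assume "\<not> (0::rat) < of_int j"
        then have "of_int j = (0::rat)" using t1 by simp
        then show False using q by simp
      qed
      then show ?thesis by simp
    qed
    have "(1 - \<beta>) * (of_int j :: rat) < (of_nat m + 1) / (of_nat m + 2) * of_int j"
      using bb jp by (intro mult_strict_right_mono) auto
    with t3 have "(of_nat m + 1) * (of_int i - of_nat (m*m)) < (of_nat m + 1) / (of_nat m + 2) * (of_int j :: rat)"
      by linarith
    then have "(of_nat m + 2) * ((of_nat m + 1) * (of_int i - of_nat (m*m))) < (of_nat m + 1) * (of_int j :: rat)"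
      using m2 by (simp add: field_simps)
    then have "(of_nat m + 1) * ((of_nat m + 2) * (of_int i - of_nat (m*m))) < (of_nat m + 1) * (of_int j :: rat)"
      by (simp add: algebra_simps)
    then have "(of_nat m + 2) * (of_int i - of_nat (m*m)) < (of_int j :: rat)"
      using mp by (simp add: mult_less_cancel_left_pos)
    then have "of_int ((int m + 2) * (i - int m * int m)) < (of_int j :: rat)" by simp
    then have r1: "(int m + 2) * (i - int m * int m) + 1 \<le> j" by linarith
    have r2: "int m * j + 1 \<le> (int m + 1) * i" using lj jp by simp
    define k where "k = i - int m * int m - int m"
    have k0: "k \<ge> 0" using ib k_def by simp
    have iek: "i = int m * int m + int m + k" using k_def by simp
    have "int m * ((int m + 2) * (i - int m * int m) + 1) \<le> int m * j"
      using r1 m1 by (intro mult_left_mono) auto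
    then have "int m * ((int m + 2) * (i - int m * int m) + 1) + 1 \<le> (int m + 1) * i" using r2 by linarith
    then have "k * (int m * int m + int m - 1) + 1 \<le> 0" unfolding iek by (simp add: algebra_simps)
    moreover have "int m * int m \<ge> 0" by simp
    then have "int m * int m + int m - 1 \<ge> 0" using m1 by linarith
    then have "k * (int m * int m + int m - 1) \<ge> 0" using k0
      by (intro mult_nonneg_nonneg)
    ultimately show False by linarith
  qed
  show ?thesis
  proof (cases "i = 0")
    case True then show ?thesis using c1 by simp
  next
    case False then show ?thesis using i0 c2 by simp
  qed
qed

lemma alt_sum:
  fixes x :: "'a::field_char_0"
  shows "(\<Sum>a\<le>n. (-1) ^ (n - a) * (x gchoose a)) = (x - 1) gchoose n"
proof (induction n)
  case 0 then show ?case by simp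
next
  case (Suc n)
  have "(\<Sum>a\<le>Suc n. (-1) ^ (Suc n - a) * (x gchoose a))
      = (x gchoose Suc n) - (\<Sum>a\<le>n. (-1) ^ (n - a) * (x gchoose a))"
  proof -
    have "(\<Sum>a\<le>n. (-1) ^ (Suc n - a) * (x gchoose a)) = - (\<Sum>a\<le>n. (-1) ^ (n - a) * (x gchoose a))"
      by (simp add: sum_negf[symmetric] Suc_diff_le)
    then show ?thesis by simp
  qed
  also have "\<dots> = (x gchoose Suc n) - ((x - 1) gchoose n)" using Suc by simp
  also have "\<dots> = (x - 1) gchoose Suc n"
    using gbinomial_Suc_Suc[of "x - 1" n] by simp
  finally show ?case .
qed

theorem lemma5p7:
  fixes m :: nat and \<alpha> \<beta> :: rat
  assumes "alg_closed_type TYPE('k::field_char_0)"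
    and "1 \<le> m"
    and "0 < \<alpha>"
    and "\<alpha> < 1 / (1 + (of_nat m + 1) + (of_nat m + 1)^2)"
    and "1 / (of_nat m + 2) < \<beta>"
    and "\<beta> < 1 - 1 / (1 + 1 / (of_nat m + 1) + 1 / (of_nat m + 1)^2
                       - \<alpha> / (1 - (of_nat m + 2) * \<alpha>))"
  shows "m \<notin> HC TYPE('k) \<alpha> \<beta> m"
proof
  assume "m \<in> HC TYPE('k) \<alpha> \<beta> m"
  then obtain c :: "int \<times> int \<Rightarrow> 'k" where lp: "laurent_poly c"
    and nt: "newton_in_tri \<alpha> \<beta> m (m * m) c"
    and va: "vanishes_to_order_at_t0 c (m * (m + 1))" and c0: "c (0, 0) \<noteq> 0"
    unfolding HC_def by auto
  define S where "S = lsupp c"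
  define n where "n = m * (m + 1) - 1"
  have fin: "finite S" using lp by (simp add: S_def lsupp_def laurent_poly_def)
  have inS: "(0, 0) \<in> S" using c0 by (simp add: S_def lsupp_def)
  have geo: "\<And>i j. (i, j) \<in> S \<Longrightarrow> (i = 0 \<and> j = 0) \<or> (1 \<le> i \<and> i < int (m * (m + 1)))"
  proof -
    fix i j assume "(i, j) \<in> S"
    then have "tri \<alpha> \<beta> m (m * m) (of_int i, of_int j)"
      using nt by (auto simp: newton_in_tri_def S_def)
    then show "(i = 0 \<and> j = 0) \<or> (1 \<le> i \<and> i < int (m * (m + 1)))"
      using geom assms(2,3,5) by blast
  qed
  have z: "\<And>a. a \<le> n \<Longrightarrow> (\<Sum>(i, j) \<in> S. c (i, j) * (of_int i gchoose a)) = 0"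
  proof -
    fix a assume "a \<le> n"
    moreover have "m * (m + 1) \<ge> 1" using assms(2) by simp
    ultimately have "a + 0 < m * (m + 1)" unfolding n_def by linarith
    then have "(\<Sum>(i, j) \<in> S. c (i, j) * ((of_int i :: 'k) gchoose a) * ((of_int j :: 'k) gchoose 0)) = 0"
      using va unfolding vanishes_to_order_at_t0_def S_def by blast
    then show "(\<Sum>(i, j) \<in> S. c (i, j) * (of_int i gchoose a)) = 0" by simp
  qed
  have "0 = (\<Sum>a\<le>n. (-1) ^ (n - a) * (\<Sum>(i, j) \<in> S. c (i, j) * (of_int i gchoose a)))"
    using z by simp
  also have "\<dots> = (\<Sum>(i, j) \<in> S. c (i, j) * (\<Sum>a\<le>n. (-1) ^ (n - a) * (of_int i gchoose a)))"
  proof -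
    have "(\<Sum>a\<le>n. (-1) ^ (n - a) * (\<Sum>(i, j) \<in> S. c (i, j) * (of_int i gchoose a)))
        = (\<Sum>a\<le>n. \<Sum>p \<in> S. (-1) ^ (n - a) * (c p * (of_int (fst p) gchoose a)))"
      by (simp add: sum_distrib_left case_prod_beta)
    also have "\<dots> = (\<Sum>p \<in> S. \<Sum>a\<le>n. (-1) ^ (n - a) * (c p * (of_int (fst p) gchoose a)))"
      by (rule sum.swap)
    also have "\<dots> = (\<Sum>p \<in> S. c p * (\<Sum>a\<le>n. (-1) ^ (n - a) * (of_int (fst p) gchoose a)))"
      by (simp add: sum_distrib_left mult.left_commute)
    finally show ?thesis by (simp add: case_prod_beta)
  qed
  also have "\<dots> = (\<Sum>(i, j) \<in> S. c (i, j) * ((of_int i - 1) gchoose n))"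
    by (simp add: alt_sum)
  also have "\<dots> = c (0, 0) * ((of_int 0 - 1) gchoose n)"
  proof -
    have "(\<Sum>(i, j) \<in> S. c (i, j) * ((of_int i - 1) gchoose n)) =
      (\<Sum>p \<in> {(0,0)}. (\<lambda>(i, j). c (i, j) * (((of_int i :: 'k) - 1) gchoose n)) p)"
    proof (rule sum.mono_neutral_right[OF fin])
      show "{(0, 0)} \<subseteq> S" using inS by simp
      show "\<forall>p\<in>S - {(0, 0)}. (\<lambda>(i, j). c (i, j) * (((of_int i :: 'k) - 1) gchoose n)) p = 0"
      proof
        fix p assume pS: "p \<in> S - {(0, 0)}"
        obtain i j where pij: "p = (i, j)" by (cases p)
        with pS geo have ii: "1 \<le> i" "i < int (m * (m + 1))" by auto
        define k where "k = nat (i - 1)"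
        have ik: "(of_int i :: 'k) - 1 = of_nat k" using ii k_def by (simp add: of_nat_nat)
        have "k < n" using ii k_def n_def by linarith
        then have "(of_nat k :: 'k) gchoose n = 0"
          by (simp add: binomial_gbinomial[symmetric])
        then show "(\<lambda>(i, j). c (i, j) * (((of_int i :: 'k) - 1) gchoose n)) p = 0"
          using pij ik by simp
      qed
    qed
    then show ?thesis by simp
  qed
  also have "\<dots> = c (0, 0) * (-1) ^ n"
    using gbinomial_negated_upper[of "-1 :: 'k" n] by (simp add: binomial_gbinomial[symmetric])
  finally have "c (0, 0) * (-1) ^ n = 0" by simp
  then show False using c0 by simp
qed

end
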